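(* Under the setting described in the context, if $\mathbb P^x(\zeta<\infty)=1$ for every $x$, then $\bigcap_{g\in C_0^{0,1}(\mathbb R^d)}\Gamma_{out}[g]=\partial_0 O$.
   Context: Let $d\ge1$, $\mathbb D^d$ the space of càdlàg paths $[0,\infty)\to\mathbb R^d$, $X_t(\omega)=\omega(t)$. $\{P_t\}$ is a Feller semigroup on $C_0(\mathbb R^d)$ with generator whose domain contains $C_0^\infty(\mathbb R^d)$; $\mathbb P^x$ is the law on $\mathbb D^d$ of the càdlàg Feller process with this semigroup started at $x$, $\mathbb E^x$ its expectation (filtration: natural filtration augmented by all $\mathbb P^\nu$-null sets, intersected over initial laws $\nu$). $O\subset\mathbb R^d$ is a connected bounded open set; $\ell$ is a fixed Lipschitz function vanishing at infinity; $\lambda>0$. $C_0^{0,1}(\mathbb R^d)$ denotes the Lipschitz functions on $\mathbb R^d$ vanishing at infinity. $\tau_B(\omega)=\inf\{t>0:\omega(t)\notin B\}$, $\zeta=\tau_{\bar O}$. For $g\in C_0^{0,1}(\mathbb R^d)$ let $v_g(x)=\mathbb E^x\big[\int_0^\zeta e^{-\lambda s}\ell(X_s)ds+e^{-\lambda\zeta}g(X_\zeta)\big]$ and $\Gamma_{out}[g]=\{x\in\partial O: v_g(x)=g(x)\}$. A point $x$ is regular for $B$ if $\mathbb P^x(\tau_{B^c}=0)=1$; $\partial_0O=\{x\in\partial O: x$ regular for $\bar O^c\}$. *)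

theory Defs
  imports "HOL-Probability.Probability"
begin

definition C0 :: "(real^'n \<Rightarrow> real) set" where
  "C0 = {f. continuous_on UNIV f \<and> (f \<longlongrightarrow> 0) at_infinity}"

definition C0_lip :: "(real^'n \<Rightarrow> real) set" where
  "C0_lip = {f. (\<exists>L. lipschitz_on L UNIV f) \<and> (f \<longlongrightarrow> 0) at_infinity}"

definition partial_deriv :: "'n::finite \<Rightarrow> (real^'n \<Rightarrow> real) \<Rightarrow> real^'n \<Rightarrow> real" where
  "partial_deriv i f x = frechet_derivative f (at x) (axis i 1)"

fun iter_partial :: "'n::finite list \<Rightarrow> (real^'n \<Rightarrow> real) \<Rightarrow> real^'n \<Rightarrow> real" where
  "iter_partial [] f = f"
| "iter_partial (i # is) f = partial_deriv i (iter_partial is f)"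

definition smooth :: "(real^'n::finite \<Rightarrow> real) \<Rightarrow> bool" where
  "smooth f \<longleftrightarrow> (\<forall>is x. iter_partial is f differentiable (at x))"

definition C0_smooth :: "(real^'n::finite \<Rightarrow> real) set" where
  "C0_smooth = {f. smooth f \<and> (\<forall>is. iter_partial is f \<in> C0)}"

definition feller_semigroup :: "(real \<Rightarrow> (real^'n \<Rightarrow> real) \<Rightarrow> real^'n \<Rightarrow> real) \<Rightarrow> bool" where
  "feller_semigroup Pt \<longleftrightarrow>
     (\<forall>t f. 0 \<le> t \<longrightarrow> f \<in> C0 \<longrightarrow> Pt t f \<in> C0)
   \<and> (\<forall>t f g a b. 0 \<le> t \<longrightarrow> f \<in> C0 \<longrightarrow> g \<in> C0 \<longrightarrow>
        Pt t (\<lambda>x. a * f x + b * g x) = (\<lambda>x. a * Pt t f x + b * Pt t g x))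
   \<and> (\<forall>t f x. 0 \<le> t \<longrightarrow> f \<in> C0 \<longrightarrow> (\<forall>y. 0 \<le> f y) \<longrightarrow> 0 \<le> Pt t f x)
   \<and> (\<forall>t f x. 0 \<le> t \<longrightarrow> f \<in> C0 \<longrightarrow> (\<forall>y. f y \<le> 1) \<longrightarrow> Pt t f x \<le> 1)
   \<and> (\<forall>f. f \<in> C0 \<longrightarrow> Pt 0 f = f)
   \<and> (\<forall>s t f. 0 \<le> s \<longrightarrow> 0 \<le> t \<longrightarrow> f \<in> C0 \<longrightarrow> Pt (s + t) f = Pt s (Pt t f))
   \<and> (\<forall>f. f \<in> C0 \<longrightarrow> uniform_limit UNIV (\<lambda>t. Pt t f) f (at_right 0))"

definition generator_domain :: "(real \<Rightarrow> (real^'n \<Rightarrow> real) \<Rightarrow> real^'n \<Rightarrow> real) \<Rightarrow> (real^'n \<Rightarrow> real) set" where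
  "generator_domain Pt = {f \<in> C0. \<exists>g \<in> C0.
      uniform_limit UNIV (\<lambda>t x. (Pt t f x - f x) / t) g (at_right 0)}"

text \<open>Paths are functions on the real line, extended constantly to negative times,
  so that they are in bijection with cadlag paths on [0,infinity).\<close>
definition cadlag :: "(real \<Rightarrow> real^'n) \<Rightarrow> bool" where
  "cadlag \<omega> \<longleftrightarrow> (\<forall>t\<ge>0. continuous (at_right t) \<omega>)
                \<and> (\<forall>t>0. \<exists>l. (\<omega> \<longlongrightarrow> l) (at_left t))
                \<and> (\<forall>t<0. \<omega> t = \<omega> 0)"

definition paths :: "(real \<Rightarrow> real^'n) set" where
  "paths = {\<omega>. cadlag \<omega>}"

definition path_space :: "(real \<Rightarrow> real^'n) measure" where
  "path_space = sigma paths
     {{\<omega> \<in> paths. \<omega> t \<in> A} | t A. 0 \<le> t \<and> A \<in> sets borel}"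

definition nat_filt :: "real \<Rightarrow> (real \<Rightarrow> real^'n) set set" where
  "nat_filt s = sigma_sets paths
     {{\<omega> \<in> paths. \<omega> r \<in> A} | r A. 0 \<le> r \<and> r \<le> s \<and> A \<in> sets borel}"

definition feller_process ::
  "(real \<Rightarrow> (real^'n \<Rightarrow> real) \<Rightarrow> real^'n \<Rightarrow> real) \<Rightarrow> (real^'n \<Rightarrow> (real \<Rightarrow> real^'n) measure) \<Rightarrow> bool" where
  "feller_process Pt P \<longleftrightarrow>
     feller_semigroup Pt
   \<and> (\<forall>x. prob_space (P x) \<and> sets (P x) = sets path_space)
   \<and> (\<forall>x. AE \<omega> in P x. \<omega> 0 = x)
   \<and> (\<forall>x s t f A. 0 \<le> s \<longrightarrow> 0 \<le> t \<longrightarrow> f \<in> C0 \<longrightarrow> A \<in> nat_filt s \<longrightarrow>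
        (\<integral>\<omega>. indicator A \<omega> * f (\<omega> (s + t)) \<partial>P x)
      = (\<integral>\<omega>. indicator A \<omega> * Pt t f (\<omega> s) \<partial>P x))"

definition exit_time :: "(real^'n) set \<Rightarrow> (real \<Rightarrow> real^'n) \<Rightarrow> ereal" where
  "exit_time B \<omega> = Inf {ereal t | t. 0 < t \<and> \<omega> t \<notin> B}"

definition payoff ::
  "(real^'n) set \<Rightarrow> (real^'n \<Rightarrow> real) \<Rightarrow> real \<Rightarrow> (real^'n \<Rightarrow> real) \<Rightarrow> (real \<Rightarrow> real^'n) \<Rightarrow> real" where
  "payoff Dom ell lam g \<omega> =
     (let \<zeta> = exit_time (closure Dom) \<omega> in
       interval_lebesgue_integral lborel 0 \<zeta> (\<lambda>s. exp (- lam * s) * ell (\<omega> s))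
       + (if \<zeta> = \<infinity> then 0
          else exp (- lam * real_of_ereal \<zeta>) * g (\<omega> (real_of_ereal \<zeta>))))"

definition value_fn ::
  "(real^'n \<Rightarrow> (real \<Rightarrow> real^'n) measure) \<Rightarrow> (real^'n) set \<Rightarrow> (real^'n \<Rightarrow> real) \<Rightarrow> real
     \<Rightarrow> (real^'n \<Rightarrow> real) \<Rightarrow> real^'n \<Rightarrow> real" where
  "value_fn P Dom ell lam g x = (\<integral>\<omega>. payoff Dom ell lam g \<omega> \<partial>completion (P x))"

definition Gamma_out ::
  "(real^'n \<Rightarrow> (real \<Rightarrow> real^'n) measure) \<Rightarrow> (real^'n) set \<Rightarrow> (real^'n \<Rightarrow> real) \<Rightarrow> real
     \<Rightarrow> (real^'n \<Rightarrow> real) \<Rightarrow> (real^'n) set" where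
  "Gamma_out P Dom ell lam g = {x \<in> frontier Dom. value_fn P Dom ell lam g x = g x}"

definition regular_for ::
  "(real^'n \<Rightarrow> (real \<Rightarrow> real^'n) measure) \<Rightarrow> (real^'n) set \<Rightarrow> real^'n \<Rightarrow> bool" where
  "regular_for P B x \<longleftrightarrow>
     emeasure (completion (P x)) {\<omega> \<in> space (P x). exit_time (- B) \<omega> = 0} = 1"

definition regular_boundary ::
  "(real^'n \<Rightarrow> (real \<Rightarrow> real^'n) measure) \<Rightarrow> (real^'n) set \<Rightarrow> (real^'n) set" where
  "regular_boundary P Dom = {x \<in> frontier Dom. regular_for P (- closure Dom) x}"

end

theory Submission
  imports Defs
begin

lemma cm_measurable_AE_const:
  fixes f :: "'a \<Rightarrow> real"
  assumes ae: "AE w in completion M. f w = c"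
  shows "f \<in> borel_measurable (completion M)"
proof (rule measurableI)
  fix A :: "real set" assume "A \<in> sets borel"
  show "f -` A \<inter> space (completion M) \<in> sets (completion M)"
  proof (cases "c \<in> A")
    case True
    have "AE w in completion M. w \<in> space (completion M) \<longleftrightarrow> w \<in> f -` A \<inter> space (completion M)"
      by (rule eventually_mono[OF ae]) (use True in auto)
    then show ?thesis by (rule completion.in_sets_AE) auto
  next
    case False
    have "AE w in completion M. w \<in> {} \<longleftrightarrow> w \<in> f -` A \<inter> space (completion M)"
      by (rule eventually_mono[OF ae]) (use False in auto)
    then show ?thesis by (rule completion.in_sets_AE) auto
  qed
qed auto

lemma exit_time_nonneg: "0 \<le> exit_time B w"
  unfolding exit_time_def by (rule Inf_greatest) auto

lemma J_le1:
  fixes z :: ereal and lam :: real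
  assumes "0 \<le> z" "lam > 0" "0 \<le> c" "c \<le> 1"
  shows "(if z = \<infinity> then 0 else exp(-lam*real_of_ereal z) * c) \<le> 1"
proof (cases "z = \<infinity>")
  case False
  have "0 \<le> real_of_ereal z" using assms(1) by (simp add: real_of_ereal_pos)
  then have "exp(-lam*real_of_ereal z) \<le> 1" using assms(2) by simp
  then have "exp(-lam*real_of_ereal z) * c \<le> 1 * 1" using assms by (intro mult_mono) auto
  then show ?thesis using False by simp
qed simp

lemma J_one:
  fixes z :: ereal and lam :: real
  assumes "0 \<le> z" "lam > 0" "c \<le> 1"
    and eq: "(if z = \<infinity> then 0 else exp(-lam*real_of_ereal z) * c) = 1"
  shows "z = 0"
proof -
  have zi: "z \<noteq> \<infinity>" using eq by (cases "z = \<infinity>") auto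
  have zm: "z \<noteq> -\<infinity>" using assms(1) by auto
  define r where "r = real_of_ereal z"
  have zr: "z = ereal r" unfolding r_def using zi zm by (cases z) auto
  have e: "exp(-lam*r) * c = 1" using eq zi unfolding r_def by simp
  have r0: "0 \<le> r" using assms(1) zr by simp
  have "c > 0"
  proof (rule ccontr)
    assume "\<not> c > 0"
    then have "exp(-lam*r) * c \<le> 0" by (intro mult_nonneg_nonpos) auto
    then show False using e by linarith
  qed
  have "1 \<le> exp(-lam*r)"
  proof (rule ccontr)
    assume a: "\<not> ?thesis"
    have "exp(-lam*r) * c \<le> exp(-lam*r) * 1"
      using assms(3) by (intro mult_left_mono) auto
    then show False using e a by linarith
  qed
  then have "0 \<le> -lam*r" by (simp only: one_le_exp_iff)
  then have "lam * r \<le> 0" by linarith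
  then have "r \<le> 0" using assms(2) mult_le_0_iff[of lam r] by auto
  then have "r = 0" using r0 by linarith
  then show ?thesis using zr by (simp add: zero_ereal_def)
qed

lemma maxlip: "\<bar>max 0 (1 - p) - max 0 (1 - q)\<bar> \<le> \<bar>p - (q::real)\<bar>"
  by (simp add: max_def abs_le_iff abs_if)

lemma h_C0:
  fixes x :: "real^'n" and a :: real
  assumes "a \<ge> 0"
  shows "(\<lambda>y. a * max 0 (1 - dist y x)) \<in> C0_lip"
proof -
  have "lipschitz_on a UNIV (\<lambda>y. a * max 0 (1 - dist y x))"
  proof (rule lipschitz_onI)
    fix y z :: "real^'n"
    have d: "\<bar>dist y x - dist x z\<bar> \<le> dist y z" by (rule abs_dist_diff_le)
    have "\<bar>max 0 (1 - dist y x) - max 0 (1 - dist z x)\<bar> \<le> \<bar>dist y x - dist z x\<bar>"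
      by (rule maxlip)
    then have 1: "\<bar>max 0 (1 - dist y x) - max 0 (1 - dist z x)\<bar> \<le> dist y z"
      using d dist_commute[of z x] by linarith
    have "dist (a * max 0 (1 - dist y x)) (a * max 0 (1 - dist z x))
        = a * \<bar>max 0 (1 - dist y x) - max 0 (1 - dist z x)\<bar>"
      using assms unfolding dist_real_def by (simp add: abs_mult right_diff_distrib[symmetric])
    also have "\<dots> \<le> a * dist y z"
      using assms 1 by (intro mult_left_mono) auto
    finally show "dist (a * max 0 (1 - dist y x)) (a * max 0 (1 - dist z x)) \<le> a * dist y z" .
  qed (use assms in auto)
  moreover have "((\<lambda>y. a * max 0 (1 - dist y x)) \<longlongrightarrow> 0) at_infinity"
  proof (rule tendsto_eventually)
    show "\<forall>\<^sub>F y in at_infinity. a * max 0 (1 - dist y x) = 0"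
      unfolding eventually_at_infinity
    proof (intro exI allI impI)
      fix y :: "real^'n" assume "norm y \<ge> norm x + 1"
      then have "dist y x \<ge> 1" using norm_triangle_ineq2[of y x] unfolding dist_norm by linarith
      then show "a * max 0 (1 - dist y x) = 0" by simp
    qed
  qed
  ultimately show ?thesis unfolding C0_lip_def by blast
qed

theorem lemmaA1:
  fixes Pt :: "real \<Rightarrow> (real^'n \<Rightarrow> real) \<Rightarrow> real^'n \<Rightarrow> real"
    and P :: "real^'n \<Rightarrow> (real \<Rightarrow> real^'n) measure"
    and Dom :: "(real^'n) set"
    and ell :: "real^'n \<Rightarrow> real"
    and lam :: real
  assumes proc: "feller_process Pt P"
    and gen: "C0_smooth \<subseteq> generator_domain Pt"
    and O_open: "open Dom" and O_bdd: "bounded Dom" and O_conn: "connected Dom"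
    and ell: "ell \<in> C0_lip"
    and lam: "lam > 0"
    and finite_exit: "\<forall>x. emeasure (completion (P x))
                        {\<omega> \<in> space (P x). exit_time (closure Dom) \<omega> < \<infinity>} = 1"
  shows "(\<Inter>g \<in> C0_lip. Gamma_out P Dom ell lam g) = regular_boundary P Dom"
proof
  show "regular_boundary P Dom \<subseteq> (\<Inter>g \<in> C0_lip. Gamma_out P Dom ell lam g)"
  proof
    fix x assume xr: "x \<in> regular_boundary P Dom"
    define M where "M = completion (P x)"
    have ps: "prob_space (P x)" using proc unfolding feller_process_def by auto
    then have psM: "prob_space M" unfolding M_def using prob_space.prob_space_completion by blast
    let ?S = "{\<omega> \<in> space (P x). exit_time (closure Dom) \<omega> = 0}"
    have S1: "emeasure M ?S = 1" using xr unfolding regular_boundary_def regular_for_def M_def by simp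
    then have Sm: "?S \<in> sets M" using emeasure_notin_sets by fastforce
    have AE1: "AE w in M. w \<in> ?S"
      using prob_space.AE_in_set_eq_1[OF psM Sm] S1 by (simp add: measure_def)
    have AE2: "AE w in M. w 0 = x"
      unfolding M_def using proc unfolding feller_process_def by (auto intro: AE_completion)
    show "x \<in> (\<Inter>g \<in> C0_lip. Gamma_out P Dom ell lam g)"
    proof
      fix g :: "real^'n \<Rightarrow> real" assume "g \<in> C0_lip"
      have AE3: "AE w in M. payoff Dom ell lam g w = g x"
        using AE1 AE2
      proof eventually_elim
        case (elim w)
        then have z: "exit_time (closure Dom) w = 0" by simp
        have "einterval 0 0 = {}" by (auto simp: einterval_def)
        then show ?case using elim z
          by (simp add: payoff_def Let_def interval_lebesgue_integral_def zero_ereal_def set_lebesgue_integral_def)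
      qed
      have "value_fn P Dom ell lam g x = (\<integral>w. g x \<partial>M)"
        unfolding value_fn_def M_def[symmetric]
      proof (rule integral_cong_AE)
        show "payoff Dom ell lam g \<in> borel_measurable M"
          using cm_measurable_AE_const[where M="P x" and f="payoff Dom ell lam g" and c="g x"] AE3 unfolding M_def by simp
      qed (use AE3 in auto)
      also have "\<dots> = g x" using psM prob_space.prob_space by (simp add: prob_space.prob_space)
      finally show "x \<in> Gamma_out P Dom ell lam g"
        using xr unfolding Gamma_out_def regular_boundary_def by auto
    qed
  qed
next
  show "(\<Inter>g \<in> C0_lip. Gamma_out P Dom ell lam g) \<subseteq> regular_boundary P Dom"
  proof
    fix x assume xI: "x \<in> (\<Inter>g \<in> C0_lip. Gamma_out P Dom ell lam g)"
    define M where "M = completion (P x)"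
    have ps: "prob_space (P x)" using proc unfolding feller_process_def by auto
    then have psM: "prob_space M" unfolding M_def using prob_space.prob_space_completion by blast
    define h where "h = (\<lambda>y::real^'n. 1 * max 0 (1 - dist y x))"
    define h2 where "h2 = (\<lambda>y::real^'n. 2 * max 0 (1 - dist y x))"
    have hC: "h \<in> C0_lip" unfolding h_def by (rule h_C0) simp
    have h2C: "h2 \<in> C0_lip" unfolding h2_def by (rule h_C0) simp
    have hx: "h x = 1" "h2 x = 2" unfolding h_def h2_def by auto
    have hb: "\<And>y. 0 \<le> h y \<and> h y \<le> 1" unfolding h_def by auto
    have G1: "x \<in> Gamma_out P Dom ell lam h" using xI hC by blast
    have G2: "x \<in> Gamma_out P Dom ell lam h2" using xI h2C by blast
    have xf: "x \<in> frontier Dom" using G1 unfolding Gamma_out_def by simp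
    have v1: "integral\<^sup>L M (payoff Dom ell lam h) = 1"
      using G1 hx unfolding Gamma_out_def value_fn_def M_def by simp
    have v2: "integral\<^sup>L M (payoff Dom ell lam h2) = 2"
      using G2 hx unfolding Gamma_out_def value_fn_def M_def by simp
    define Z where "Z = (\<lambda>w. exit_time (closure Dom) w)"
    define I where "I = (\<lambda>w. interval_lebesgue_integral lborel 0 (Z w) (\<lambda>s. exp (- lam * s) * ell (w s)))"
    define J where "J = (\<lambda>w. if Z w = \<infinity> then 0 else exp (- lam * real_of_ereal (Z w)) * h (w (real_of_ereal (Z w))))"
    have p1: "payoff Dom ell lam h = (\<lambda>w. I w + J w)"
      unfolding payoff_def I_def J_def Z_def by (auto simp: Let_def)
    have p2: "payoff Dom ell lam h2 = (\<lambda>w. I w + 2 * J w)"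
      unfolding payoff_def I_def J_def Z_def h_def h2_def by (auto simp: Let_def)
    have i1: "integrable M (\<lambda>w. I w + J w)"
      using v1 p1 not_integrable_integral_eq by fastforce
    have i2: "integrable M (\<lambda>w. I w + 2 * J w)"
      using v2 p2 not_integrable_integral_eq by fastforce
    have iJ: "integrable M J"
    proof -
      have "integrable M (\<lambda>w. (I w + 2 * J w) - (I w + J w))" by (rule Bochner_Integration.integrable_diff[OF i2 i1])
      moreover have "(\<lambda>w. (I w + 2 * J w) - (I w + J w)) = J" by auto
      ultimately show ?thesis by simp
    qed
    have intJ: "integral\<^sup>L M J = 1"
    proof -
      have "integral\<^sup>L M (\<lambda>w. (I w + 2 * J w) - (I w + J w)) = 2 - 1"
        using Bochner_Integration.integral_diff[OF i2 i1] v1 v2 p1 p2 by simp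
      moreover have "(\<lambda>w. (I w + 2 * J w) - (I w + J w)) = J" by auto
      ultimately show ?thesis by simp
    qed
    have Zpos: "\<And>w. 0 \<le> Z w" unfolding Z_def by (rule exit_time_nonneg)
    have Jle: "\<And>w. J w \<le> 1" unfolding J_def using J_le1[OF Zpos lam] hb by blast
    have i3: "integrable M (\<lambda>w. 1 - J w)" using iJ psM
      by (intro Bochner_Integration.integrable_diff) (auto simp: prob_space.finite_measure finite_measure.integrable_const)
    have "integral\<^sup>L M (\<lambda>w. 1 - J w) = 0"
      using Bochner_Integration.integral_diff[OF _ iJ, of "\<lambda>_. 1"] intJ psM
      by (simp add: prob_space.finite_measure finite_measure.integrable_const prob_space.prob_space)
    then have "AE w in M. 1 - J w = 0"
      using integral_nonneg_eq_0_iff_AE[OF i3] Jle by simp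
    then have AEZ: "AE w in M. Z w = 0"
    proof (rule eventually_mono)
      fix w assume "1 - J w = 0"
      then have "J w = 1" by simp
      then show "Z w = 0" unfolding J_def using J_one[OF Zpos lam] hb by blast
    qed
    let ?S = "{\<omega> \<in> space (P x). exit_time (closure Dom) \<omega> = 0}"
    have "AE w in M. w \<in> space M \<longleftrightarrow> w \<in> ?S"
      using AEZ by (rule eventually_mono) (auto simp: Z_def M_def)
    then have Sm: "?S \<in> sets M" unfolding M_def
      by (rule completion.in_sets_AE) auto
    have "AE w in M. w \<in> ?S"
      using AEZ by (rule AE_mp) (auto intro!: AE_I2 simp: Z_def M_def)
    then have "measure M ?S = 1" using prob_space.AE_in_set_eq_1[OF psM Sm] by simp
    then have "emeasure M ?S = 1" using finite_measure.emeasure_eq_measure[OF prob_space.finite_measure[OF psM]] by simp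
    then show "x \<in> regular_boundary P Dom"
      using xf unfolding regular_boundary_def regular_for_def M_def by simp
  qed
qed

end
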